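(* Let $\sigma$ be a profile of (mixed) strategies in a $k$-player alternating move game, with utility vector $(t_1,\dots,t_k)$. Then for every $\alpha>0$ there exists a cyclic path in the game graph $G$ whose average weight is at least $t_i-\alpha$ in every dimension $i$.
   Context: A $k$-player alternating move game has finite action sets $A_1,\dots,A_k$ and utilities $u_i:A_1\times\dots\times A_k\to[-1,1]$. In round $t$ player $j=1+(t\bmod k)$ chooses an action; the action vector $a^t$ consists of each player's most recent action; in round $t$ player $i$ receives $u_i(a^t)$ (utility $0$ in the first $k$ rounds). A mixed strategy maps histories to distributions over the player's actions. For a profile $\sigma$, $P_{i,t}(\sigma)$ is the expected value of $\frac1t\sum_{s=1}^t u_i(a^s)$, and player $i$'s utility is $t_i=\liminf_{t\to\infty}P_{i,t}(\sigma)$. The game graph $G$ has vertex set $(A_1\times\dots\times A_k)\times\{1,\dots,k\}$; there is an edge from $(\vec a,i)$ to $(\vec b,i+1)$ (with $k+1$ read as $1$) iff $\vec a$ and $\vec b$ differ at most in coordinate $i$, with weight vector $(u_1(\vec b),\dots,u_k(\vec b))$. A cyclic path is a finite path starting and ending at the same vertex; its average weight in dimension $i$ is the sum of the $i$-th weights of its edges divided by its length. *)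

theory Defs
  imports "HOL-Probability.Probability"
begin

text \<open>Players are indexed 0,...,k-1 (paper: 1,...,k). Rounds are numbered 1,2,...;
  in round t player (t mod k) moves (paper: player 1 + (t mod k)).
  A history is the list of actions chosen so far, entry number r (0-based)
  being the action chosen in round r+1.\<close>

definition mover :: "nat \<Rightarrow> nat \<Rightarrow> nat" where
  "mover k t = t mod k"

definition recent_action :: "nat \<Rightarrow> 'a list \<Rightarrow> nat \<Rightarrow> 'a" where
  "recent_action k h j = last [h ! r. r \<leftarrow> [0..<length h], mover k (r + 1) = j]"

definition action_vector :: "nat \<Rightarrow> 'a list \<Rightarrow> nat \<Rightarrow> 'a" where
  "action_vector k h = (\<lambda>j. if j < k then recent_action k h j else undefined)"

definition round_utility ::
  "nat \<Rightarrow> (nat \<Rightarrow> (nat \<Rightarrow> 'a) \<Rightarrow> real) \<Rightarrow> nat \<Rightarrow> 'a list \<Rightarrow> real" where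
  "round_utility k u i h = (if length h \<le> k then 0 else u i (action_vector k h))"

text \<open>A mixed strategy profile: sigma j h is the distribution of player j's action
  after history h.\<close>
definition mixed_profile ::
  "nat \<Rightarrow> (nat \<Rightarrow> 'a set) \<Rightarrow> (nat \<Rightarrow> 'a list \<Rightarrow> 'a pmf) \<Rightarrow> bool" where
  "mixed_profile k A \<sigma> \<longleftrightarrow> (\<forall>j<k. \<forall>h. set_pmf (\<sigma> j h) \<subseteq> A j)"

fun history_pmf :: "nat \<Rightarrow> (nat \<Rightarrow> 'a list \<Rightarrow> 'a pmf) \<Rightarrow> nat \<Rightarrow> 'a list pmf" where
  "history_pmf k \<sigma> 0 = return_pmf []"
| "history_pmf k \<sigma> (Suc t) =
     bind_pmf (history_pmf k \<sigma> t) (\<lambda>h. map_pmf (\<lambda>x. h @ [x]) (\<sigma> (mover k (Suc t)) h))"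

definition avg_payoff ::
  "nat \<Rightarrow> (nat \<Rightarrow> (nat \<Rightarrow> 'a) \<Rightarrow> real) \<Rightarrow> (nat \<Rightarrow> 'a list \<Rightarrow> 'a pmf) \<Rightarrow> nat \<Rightarrow> nat \<Rightarrow> real" where
  "avg_payoff k u \<sigma> i t =
     measure_pmf.expectation (history_pmf k \<sigma> t)
       (\<lambda>h. (1 / real t) * (\<Sum>s\<in>{1..t}. round_utility k u i (take s h)))"

definition game_utility ::
  "nat \<Rightarrow> (nat \<Rightarrow> (nat \<Rightarrow> 'a) \<Rightarrow> real) \<Rightarrow> (nat \<Rightarrow> 'a list \<Rightarrow> 'a pmf) \<Rightarrow> nat \<Rightarrow> ereal" where
  "game_utility k u \<sigma> i = liminf (\<lambda>t. ereal (avg_payoff k u \<sigma> i t))"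

definition gg_vertex :: "nat \<Rightarrow> (nat \<Rightarrow> 'a set) \<Rightarrow> ((nat \<Rightarrow> 'a) \<times> nat) \<Rightarrow> bool" where
  "gg_vertex k A v \<longleftrightarrow> fst v \<in> (\<Pi>\<^sub>E j\<in>{..<k}. A j) \<and> snd v < k"

definition gg_edge :: "nat \<Rightarrow> (nat \<Rightarrow> 'a set) \<Rightarrow> ((nat \<Rightarrow> 'a) \<times> nat) \<Rightarrow> ((nat \<Rightarrow> 'a) \<times> nat) \<Rightarrow> bool" where
  "gg_edge k A v w \<longleftrightarrow> gg_vertex k A v \<and> gg_vertex k A w \<and>
     snd w = (snd v + 1) mod k \<and> (\<forall>j. j \<noteq> snd v \<longrightarrow> fst v j = fst w j)"

definition cyclic_path :: "nat \<Rightarrow> (nat \<Rightarrow> 'a set) \<Rightarrow> ((nat \<Rightarrow> 'a) \<times> nat) list \<Rightarrow> bool" where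
  "cyclic_path k A p \<longleftrightarrow> length p \<ge> 2 \<and> hd p = last p \<and>
     (\<forall>j. j + 1 < length p \<longrightarrow> gg_edge k A (p ! j) (p ! (j + 1)))"

text \<open>Average weight in dimension i: the weight of the edge into (b, _) is u i b.\<close>
definition avg_weight ::
  "(nat \<Rightarrow> (nat \<Rightarrow> 'a) \<Rightarrow> real) \<Rightarrow> ((nat \<Rightarrow> 'a) \<times> nat) list \<Rightarrow> nat \<Rightarrow> real" where
  "avg_weight u p i = (\<Sum>j<length p - 1. u i (fst (p ! (j + 1)))) / real (length p - 1)"

end

theory Submission
  imports Defs
begin


lemma approx_weights:
  fixes H :: "'b set" and p :: "'b \<Rightarrow> real" and x :: "'b \<Rightarrow> nat \<Rightarrow> real" and I :: "nat set"
  assumes fin: "finite H" and pnn: "\<And>h. h \<in> H \<Longrightarrow> p h \<ge> 0" and psum: "sum p H = 1"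
    and xb: "\<And>h i. h \<in> H \<Longrightarrow> i \<in> I \<Longrightarrow> \<bar>x h i\<bar> \<le> 1" and eps: "\<epsilon> > 0"
  shows "\<exists>n::'b\<Rightarrow>nat. sum n H > 0 \<and>
     (\<forall>i\<in>I. (\<Sum>h\<in>H. real (n h) * x h i) \<ge> ((\<Sum>h\<in>H. p h * x h i) - \<epsilon>) * real (sum n H))"
proof -
  define c where "c = real (card H)"
  define M :: real where "M = c * (2 + \<epsilon>) / \<epsilon> + c + 1"
  have c0: "c \<ge> 0" by (simp add: c_def)
  have M1: "M * \<epsilon> \<ge> c * (2 + \<epsilon>)" using eps c0 by (simp add: M_def field_simps)
  have "c * (2 + \<epsilon>) / \<epsilon> \<ge> 0" using eps c0 by simp
  then have Mc: "M > c" by (simp add: M_def)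
  define n where "n h = nat (floor (M * p h))" for h
  have nr: "real (n h) \<le> M * p h \<and> real (n h) > M * p h - 1" if "h \<in> H" for h
  proof -
    have "M * p h \<ge> 0" using pnn[OF that] Mc c0 by simp
    then show ?thesis unfolding n_def by linarith
  qed
  have sn: "real (sum n H) \<le> M" "real (sum n H) > M - c"
  proof -
    have "real (sum n H) = (\<Sum>h\<in>H. real (n h))" by simp
    also have "\<dots> \<le> (\<Sum>h\<in>H. M * p h)" using nr by (intro sum_mono) auto
    also have "\<dots> = M" using psum by (simp add: sum_distrib_left[symmetric])
    finally show "real (sum n H) \<le> M" .
  next
    show "real (sum n H) > M - c"
    proof (cases "H = {}")
      case True then show ?thesis using psum by simp
    next
      case False
      have "(\<Sum>h\<in>H. M * p h - 1) < (\<Sum>h\<in>H. real (n h))"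
        using nr fin False by (intro sum_strict_mono) auto
      moreover have "(\<Sum>h\<in>H. M * p h - 1) = M - c"
        using psum by (simp add: sum_subtractf sum_distrib_left[symmetric] c_def)
      ultimately show ?thesis by simp
    qed
  qed
  have pos: "sum n H > 0" using sn Mc by linarith
  show ?thesis
  proof (intro exI[of _ n] conjI ballI pos)
    fix i assume i: "i \<in> I"
    define q where "q = (\<Sum>h\<in>H. p h * x h i)"
    have "(\<Sum>h\<in>H. real (n h) * x h i) \<ge> (\<Sum>h\<in>H. M * p h * x h i - 1)"
    proof (intro sum_mono)
      fix h assume h: "h \<in> H"
      have "\<bar>(M * p h - real (n h)) * x h i\<bar> \<le> 1"
      proof -
        have "\<bar>M * p h - real (n h)\<bar> \<le> 1" using nr[OF h] by linarith
        then have "\<bar>M * p h - real (n h)\<bar> * \<bar>x h i\<bar> \<le> 1 * 1"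
          using xb[OF h i] by (intro mult_mono) auto
        then show ?thesis by (simp add: abs_mult)
      qed
      then show "M * p h * x h i - 1 \<le> real (n h) * x h i" by (simp add: algebra_simps abs_le_iff)
    qed
    also have "(\<Sum>h\<in>H. M * p h * x h i - 1) = M * q - c"
      by (simp add: q_def sum_subtractf sum_distrib_left c_def mult.assoc)
    finally have key: "(\<Sum>h\<in>H. real (n h) * x h i) \<ge> M * q - c" .
    have qb: "\<bar>q\<bar> \<le> 1"
    proof -
      have "\<bar>q\<bar> \<le> (\<Sum>h\<in>H. \<bar>p h * x h i\<bar>)" unfolding q_def by (rule sum_abs)
      also have "\<dots> \<le> (\<Sum>h\<in>H. p h)"
        using pnn xb i by (intro sum_mono) (auto simp: abs_mult intro: mult_left_le)
      finally show ?thesis using psum by simp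
    qed
    have "(q - \<epsilon>) * real (sum n H) \<le> M * q - c"
    proof (cases "q - \<epsilon> \<ge> 0")
      case True
      then have "(q - \<epsilon>) * real (sum n H) \<le> (q - \<epsilon>) * M" using sn by (intro mult_left_mono) auto
      also have "\<dots> \<le> M * q - c" 
      proof -
        have "\<epsilon> * c \<ge> 0" using eps c0 by simp
        moreover have "c * (2 + \<epsilon>) = \<epsilon> * c + 2 * c" by (simp add: algebra_simps)
        ultimately have "c \<le> M * \<epsilon>" using M1 c0 by linarith
        then show ?thesis by (simp add: algebra_simps)
      qed
      finally show ?thesis .
    next
      case False
      then have "(q - \<epsilon>) * real (sum n H) \<le> (q - \<epsilon>) * (M - c)" using sn
        by (intro mult_left_mono_neg) auto
      also have "\<dots> \<le> M * q - c"
      proof -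
        have "q * c \<ge> -1 * c" using qb c0 by (intro mult_right_mono) auto
        then show ?thesis using M1 eps c0 by (simp add: algebra_simps)
      qed
      finally show ?thesis .
    qed
    then show "(q - \<epsilon>) * real (sum n H) \<le> (\<Sum>h\<in>H. real (n h) * x h i)" using key by linarith
  qed
qed



definition wk :: "nat \<Rightarrow> (nat \<Rightarrow> 'a set) \<Rightarrow> ((nat \<Rightarrow> 'a) \<times> nat) \<Rightarrow> ((nat \<Rightarrow> 'a) \<times> nat) list \<Rightarrow> ((nat \<Rightarrow> 'a) \<times> nat) \<Rightarrow> bool" where
  "wk k A v xs w \<longleftrightarrow> successively (gg_edge k A) (v # xs) \<and> last (v # xs) = w"

definition wt :: "(nat \<Rightarrow> (nat \<Rightarrow> 'a) \<Rightarrow> real) \<Rightarrow> ((nat \<Rightarrow> 'a) \<times> nat) list \<Rightarrow> nat \<Rightarrow> real" where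
  "wt u xs i = sum_list (map (\<lambda>x. u i (fst x)) xs)"

lemma wk_nil: "wk k A v [] v" by (simp add: wk_def)

lemma wk_append:
  assumes "wk k A v xs w" "wk k A w ys z"
  shows "wk k A v (xs @ ys) z"
proof -
  have s1: "successively (gg_edge k A) (v # xs)" and l1: "last (v # xs) = w"
    and s2: "successively (gg_edge k A) (w # ys)" and l2: "last (w # ys) = z"
    using assms by (auto simp: wk_def)
  have s2': "successively (gg_edge k A) ys" "ys \<noteq> [] \<Longrightarrow> gg_edge k A w (hd ys)"
    using s2 by (auto simp: successively_Cons)
  have "successively (gg_edge k A) ((v # xs) @ ys)"
    unfolding successively_append_iff using s1 s2' l1 by auto
  moreover have "last ((v # xs) @ ys) = z"
    using l1 l2 by (cases "ys = []") auto
  ultimately show ?thesis by (simp add: wk_def)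
qed

lemma wk_concat: "(\<And>xs. xs \<in> set L \<Longrightarrow> wk k A v xs v) \<Longrightarrow> wk k A v (concat L) v"
  by (induction L) (auto simp: wk_nil intro: wk_append)

lemma wk_upt:
  assumes "\<And>m. a \<le> m \<Longrightarrow> m < b \<Longrightarrow> gg_edge k A (f m) (f (Suc m))" "a \<le> b"
  shows "wk k A (f a) (map f [Suc a..<Suc b]) (f b)"
  using assms
proof (induction b)
  case 0 then show ?case by (simp add: wk_nil)
next
  case (Suc b)
  show ?case
  proof (cases "a = Suc b")
    case True then show ?thesis by (simp add: wk_nil)
  next
    case False
    then have "wk k A (f a) (map f [Suc a..<Suc b]) (f b)" using Suc by auto
    moreover have "wk k A (f b) [f (Suc b)] (f (Suc b))" using Suc.prems False by (simp add: wk_def)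
    ultimately have "wk k A (f a) (map f [Suc a..<Suc b] @ [f (Suc b)]) (f (Suc b))" by (rule wk_append)
    moreover have "map f [Suc a..<Suc (Suc b)] = map f [Suc a..<Suc b] @ [f (Suc b)]"
      using Suc.prems False by simp
    ultimately show ?thesis by simp
  qed
qed

lemma wk_vertices: "wk k A v xs w \<Longrightarrow> x \<in> set xs \<Longrightarrow> gg_vertex k A x"
proof (induction xs arbitrary: v)
  case Nil then show ?case by simp
next
  case (Cons y ys)
  have e: "gg_edge k A v y" and s: "successively (gg_edge k A) (y # ys)"
    using Cons.prems by (auto simp: wk_def)
  show ?case
  proof (cases "x = y")
    case True then show ?thesis using e by (simp add: gg_edge_def)
  next
    case False
    then have "x \<in> set ys" using Cons.prems by simp
    moreover have "wk k A y ys w" using s Cons.prems by (simp add: wk_def)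
    ultimately show ?thesis using Cons.IH by blast
  qed
qed

lemma wt_append: "wt u (xs @ ys) i = wt u xs i + wt u ys i" by (simp add: wt_def)
lemma wt_concat: "wt u (concat L) i = (\<Sum>xs\<leftarrow>L. wt u xs i)"
  by (induction L) (auto simp: wt_append, simp add: wt_def)
lemma wt_rep: "wt u (concat (replicate n xs)) i = real n * wt u xs i"
  by (induction n) (auto simp: wt_append algebra_simps, simp add: wt_def)

lemma wt_bound:
  assumes "\<And>x. x \<in> set xs \<Longrightarrow> \<bar>u i (fst x)\<bar> \<le> 1"
  shows "\<bar>wt u xs i\<bar> \<le> real (length xs)"
  using assms
proof (induction xs)
  case Nil then show ?case by (simp add: wt_def)
next
  case (Cons x xs)
  have "wt u (x # xs) i = u i (fst x) + wt u xs i" by (simp add: wt_def)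
  moreover have "\<bar>u i (fst x)\<bar> \<le> 1" using Cons.prems by simp
  moreover have "\<bar>wt u xs i\<bar> \<le> real (length xs)" using Cons by simp
  ultimately show ?case by simp
qed

lemma closed_cyclic:
  assumes "wk k A v xs v" "xs \<noteq> []"
  shows "cyclic_path k A (v # xs)" "avg_weight u (v # xs) i = wt u xs i / real (length xs)"
proof -
  have s: "successively (gg_edge k A) (v # xs)" and l: "last (v # xs) = v"
    using assms by (auto simp: wk_def)
  show "cyclic_path k A (v # xs)"
    unfolding cyclic_path_def using s l assms(2)
    by (auto simp: successively_conv_nth Suc_le_eq simp del: successively.simps)
  have "(\<Sum>j<length (v # xs) - 1. u i (fst ((v # xs) ! (j + 1)))) = (\<Sum>j<length xs. u i (fst (xs ! j)))"
    by simp
  also have "\<dots> = wt u xs i"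
    unfolding wt_def by (simp add: sum_list_sum_nth atLeast0LessThan)
  finally show "avg_weight u (v # xs) i = wt u xs i / real (length xs)"
    unfolding avg_weight_def by simp
qed



definition cv :: "nat \<Rightarrow> (nat \<Rightarrow> 'a) \<Rightarrow> (nat \<Rightarrow> 'a) \<Rightarrow> nat \<Rightarrow> nat \<Rightarrow> (nat \<Rightarrow> 'a) \<times> nat" where
  "cv k b c j m = ((\<lambda>l. if l \<in> (\<lambda>m'. (j + m') mod k) ` {..<m} then c l else b l), (j + m) mod k)"

lemma conn:
  assumes k: "k \<ge> 1" and b: "b \<in> (\<Pi>\<^sub>E l\<in>{..<k}. A l)" and c: "c \<in> (\<Pi>\<^sub>E l\<in>{..<k}. A l)" and j: "j < k"
  shows "wk k A (b, j) (map (cv k b c j) [Suc 0..<Suc k]) (c, j)"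
proof -
  have vert: "gg_vertex k A (cv k b c j m)" for m
  proof -
    have "(\<lambda>l. if l \<in> (\<lambda>m'. (j + m') mod k) ` {..<m} then c l else b l) \<in> (\<Pi>\<^sub>E l\<in>{..<k}. A l)"
    proof (rule PiE_I)
      fix l assume "l \<in> {..<k}" then show "(if l \<in> (\<lambda>m'. (j + m') mod k) ` {..<m} then c l else b l) \<in> A l"
        using b c by (auto simp: PiE_iff)
    next
      fix l assume l: "l \<notin> {..<k}"
      then have "l \<notin> (\<lambda>m'. (j + m') mod k) ` {..<m}" using k by auto
      then show "(if l \<in> (\<lambda>m'. (j + m') mod k) ` {..<m} then c l else b l) = undefined"
        using b l by (auto simp: PiE_iff extensional_def)
    qed
    then show ?thesis using k by (simp add: gg_vertex_def cv_def)
  qed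
  have edge: "gg_edge k A (cv k b c j m) (cv k b c j (Suc m))" for m
  proof -
    have "(j + Suc m) mod k = ((j + m) mod k + 1) mod k" by (simp add: mod_Suc_eq)
    moreover have "(\<lambda>m'. (j + m') mod k) ` {..<Suc m} = insert ((j + m) mod k) ((\<lambda>m'. (j + m') mod k) ` {..<m})"
      by (simp add: lessThan_Suc)
    ultimately show ?thesis unfolding gg_edge_def
    proof (intro conjI vert allI impI)
      show "snd (cv k b c j (Suc m)) = (snd (cv k b c j m) + 1) mod k" by (simp add: cv_def mod_Suc_eq)
      fix l assume "l \<noteq> snd (cv k b c j m)"
      then show "fst (cv k b c j m) l = fst (cv k b c j (Suc m)) l" by (simp add: cv_def lessThan_Suc)
    qed
  qed
  have "wk k A (cv k b c j 0) (map (cv k b c j) [Suc 0..<Suc k]) (cv k b c j k)"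
    using wk_upt[of 0 k k A "cv k b c j"] edge by simp
  moreover have "cv k b c j 0 = (b, j)" using j by (simp add: cv_def)
  moreover have "cv k b c j k = (c, j)"
  proof -
    have "l \<in> (\<lambda>m'. (j + m') mod k) ` {..<k}" if l: "l < k" for l
    proof
      have "(j + (l + k - j) mod k) mod k = (j + (l + k - j)) mod k" by (simp add: mod_add_right_eq)
      also have "j + (l + k - j) = l + k" using j by simp
      also have "(l + k) mod k = l" using l by simp
      finally show "l = (j + (l + k - j) mod k) mod k" by simp
      show "(l + k - j) mod k \<in> {..<k}" using k by simp
    qed
    note I1 = this
    have I2: "c l = b l" if "\<not> l < k" for l
      using b c that by (auto simp: PiE_iff extensional_def)
    have "(\<lambda>l. if l \<in> (\<lambda>m'. (j + m') mod k) ` {..<k} then c l else b l) = c"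
    proof
      fix l show "(if l \<in> (\<lambda>m'. (j + m') mod k) ` {..<k} then c l else b l) = c l"
        using I1[of l] I2[of l] by (cases "l < k") auto
    qed
    then show ?thesis using j by (simp add: cv_def)
  qed
  ultimately show ?thesis by simp
qed

lemma recent_snoc:
  "recent_action k (xs @ [x]) j = (if mover k (length xs + 1) = j then x else recent_action k xs j)"
proof -
  have "[(xs @ [x]) ! r. r \<leftarrow> [0..<length (xs @ [x])], mover k (r + 1) = j] =
        [xs ! r. r \<leftarrow> [0..<length xs], mover k (r + 1) = j] @ (if mover k (length xs + 1) = j then [x] else [])"
  proof -
    have "[(xs @ [x]) ! r. r \<leftarrow> [0..<length xs], mover k (r + 1) = j] = [xs ! r. r \<leftarrow> [0..<length xs], mover k (r + 1) = j]"
      by (intro arg_cong[where f=concat] map_cong) (auto simp: nth_append)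
    then show ?thesis by simp
  qed
  then show ?thesis unfolding recent_action_def by simp
qed

lemma recent_in:
  assumes k: "k \<ge> 1" and len: "length g \<ge> k" and j: "j < k"
    and val: "\<And>r. r < length g \<Longrightarrow> g ! r \<in> A (mover k (r + 1))"
  shows "recent_action k g j \<in> A j"
proof -
  define L where "L = [g ! r. r \<leftarrow> [0..<length g], mover k (r + 1) = j]"
  have setL: "set L = {g ! r | r. r < length g \<and> mover k (r + 1) = j}"
    unfolding L_def by auto
  define r0 where "r0 = (if j = 0 then k - 1 else j - 1)"
  have "r0 < length g" "mover k (r0 + 1) = j"
    using k len j by (auto simp: r0_def mover_def)
  then have "L \<noteq> []" using setL by auto
  then have "last L \<in> set L" by simp
  then obtain r where "r < length g" "mover k (r + 1) = j" "last L = g ! r" using setL by auto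
  then show ?thesis using val unfolding recent_action_def L_def[symmetric] by auto
qed

lemma av_PiE:
  assumes k: "k \<ge> 1" and len: "length g \<ge> k"
    and val: "\<And>r. r < length g \<Longrightarrow> g ! r \<in> A (mover k (r + 1))"
  shows "action_vector k g \<in> (\<Pi>\<^sub>E j\<in>{..<k}. A j)"
  using recent_in[OF k len _ val] by (auto simp: action_vector_def PiE_iff extensional_def)

definition vtx :: "nat \<Rightarrow> 'a list \<Rightarrow> nat \<Rightarrow> (nat \<Rightarrow> 'a) \<times> nat" where
  "vtx k h s = (action_vector k (take s h), (s + 1) mod k)"

lemma hist_walk:
  assumes k: "k \<ge> 1" and len: "length h = t" and kt: "k \<le> t"
    and val: "\<And>r. r < t \<Longrightarrow> h ! r \<in> A (mover k (r + 1))"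
  shows "wk k A (vtx k h k) (map (vtx k h) [Suc k..<Suc t]) (vtx k h t)"
proof (rule wk_upt[OF _ kt])
  fix m assume m: "k \<le> m" "m < t"
  have vert: "gg_vertex k A (vtx k h s)" if "k \<le> s" "s \<le> t" for s
  proof -
    have "action_vector k (take s h) \<in> (\<Pi>\<^sub>E j\<in>{..<k}. A j)"
      using that len val by (intro av_PiE[OF k]) auto
    then show ?thesis using k by (simp add: gg_vertex_def vtx_def)
  qed
  have tk: "take (Suc m) h = take m h @ [h ! m]" using m len by (simp add: take_Suc_conv_app_nth)
  have "action_vector k (take m h) l = action_vector k (take (Suc m) h) l" if "l \<noteq> (m + 1) mod k" for l
    using that m len unfolding tk action_vector_def by (auto simp: recent_snoc mover_def)
  moreover have "(Suc m + 1) mod k = ((m + 1) mod k + 1) mod k" by (simp add: mod_Suc_eq)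
  ultimately show "gg_edge k A (vtx k h m) (vtx k h (Suc m))"
    using vert[of m] vert[of "Suc m"] m unfolding gg_edge_def by (simp add: vtx_def)
qed

lemma hist_weight:
  assumes len: "length h = t" and kt: "k \<le> t"
  shows "wt u (map (vtx k h) [Suc k..<Suc t]) i = (\<Sum>s\<in>{1..t}. round_utility k u i (take s h))"
proof -
  have "wt u (map (vtx k h) [Suc k..<Suc t]) i = (\<Sum>s\<leftarrow>[Suc k..<Suc t]. u i (action_vector k (take s h)))"
    by (simp add: wt_def vtx_def o_def)
  also have "\<dots> = (\<Sum>s\<in>{Suc k..<Suc t}. u i (action_vector k (take s h)))"
    by (simp add: interv_sum_list_conv_sum_set_nat)
  also have "\<dots> = (\<Sum>s\<in>{1..t}. round_utility k u i (take s h))"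
  proof -
    have "(\<Sum>s\<in>{1..t}. round_utility k u i (take s h)) = (\<Sum>s\<in>{1..t}. if s \<le> k then 0 else u i (action_vector k (take s h)))"
      using len by (intro sum.cong) (auto simp: round_utility_def)
    also have "\<dots> = (\<Sum>s\<in>{1..t}. if \<not> s \<le> k then u i (action_vector k (take s h)) else 0)"
      by (intro sum.cong) auto
    also have "\<dots> = (\<Sum>s\<in>{s\<in>{1..t}. \<not> s \<le> k}. u i (action_vector k (take s h)))"
      by (rule sum.inter_filter[symmetric]) simp
    also have "{s\<in>{1..t}. \<not> s \<le> k} = {Suc k..<Suc t}" by auto
    finally show ?thesis by simp
  qed
  finally show ?thesis .
qed



lemma wt_bound_wk:
  assumes "wk k A v xs w" "i < k"
    and ub: "\<And>i a. i < k \<Longrightarrow> a \<in> (\<Pi>\<^sub>E j\<in>{..<k}. A j) \<Longrightarrow> \<bar>u i a\<bar> \<le> 1"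
  shows "\<bar>wt u xs i\<bar> \<le> real (length xs)"
proof (rule wt_bound)
  fix x assume "x \<in> set xs"
  then have "gg_vertex k A x" using wk_vertices assms(1) by blast
  then show "\<bar>u i (fst x)\<bar> \<le> 1" using ub assms(2) by (simp add: gg_vertex_def)
qed

lemma hist_supp:
  assumes k: "k \<ge> 1" and mp: "mixed_profile k A \<sigma>"
  shows "h \<in> set_pmf (history_pmf k \<sigma> t) \<Longrightarrow> length h = t \<and> (\<forall>r<t. h ! r \<in> A (mover k (r + 1)))"
proof (induction t arbitrary: h)
  case 0 then show ?case by simp
next
  case (Suc t)
  then obtain h' x where h': "h' \<in> set_pmf (history_pmf k \<sigma> t)" and x: "x \<in> set_pmf (\<sigma> (mover k (Suc t)) h')"
    and h: "h = h' @ [x]" by auto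
  have "mover k (Suc t) < k" using k by (simp add: mover_def)
  then have xA: "x \<in> A (mover k (Suc t))" using mp x by (auto simp: mixed_profile_def)
  have IH: "length h' = t" "\<forall>r<t. h' ! r \<in> A (mover k (r + 1))" using Suc.IH[OF h'] by auto
  show ?case
  proof (intro conjI allI impI)
    show "length h = Suc t" using h IH by simp
    fix r assume "r < Suc t"
    then consider "r < t" | "r = t" by linarith
    then show "h ! r \<in> A (mover k (r + 1))" using h IH xA by cases (auto simp: nth_append)
  qed
qed

lemma hist_fin:
  assumes k: "k \<ge> 1" and mp: "mixed_profile k A \<sigma>" and fin: "\<And>j. j < k \<Longrightarrow> finite (A j)"
  shows "finite (set_pmf (history_pmf k \<sigma> t))"
proof (induction t)
  case 0 then show ?case by simp
next
  case (Suc t)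
  have "mover k (Suc t) < k" using k by (simp add: mover_def)
  then have "finite (set_pmf (\<sigma> (mover k (Suc t)) h))" for h
    using mp fin by (meson finite_subset mixed_profile_def)
  then show ?case using Suc by simp
qed



definition Ssum :: "nat \<Rightarrow> (nat \<Rightarrow> (nat \<Rightarrow> 'a) \<Rightarrow> real) \<Rightarrow> nat \<Rightarrow> nat \<Rightarrow> 'a list \<Rightarrow> real" where
  "Ssum k u i t h = (\<Sum>s\<in>{1..t}. round_utility k u i (take s h))"

lemma S_bound:
  assumes k: "k \<ge> 1" and mp: "mixed_profile k A \<sigma>" and i: "i < k"
    and ub: "\<And>i a. i < k \<Longrightarrow> a \<in> (\<Pi>\<^sub>E j\<in>{..<k}. A j) \<Longrightarrow> \<bar>u i a\<bar> \<le> 1"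
    and h: "h \<in> set_pmf (history_pmf k \<sigma> t)"
  shows "\<bar>Ssum k u i t h\<bar> \<le> real t"
proof -
  have hs: "length h = t" "\<forall>r<t. h ! r \<in> A (mover k (r + 1))" using hist_supp[OF k mp h] by auto
  have "\<bar>round_utility k u i (take s h)\<bar> \<le> 1" if s: "s \<in> {1..t}" for s
  proof (cases "length (take s h) \<le> k")
    case True then show ?thesis by (simp add: round_utility_def)
  next
    case False
    have "action_vector k (take s h) \<in> (\<Pi>\<^sub>E j\<in>{..<k}. A j)"
      using False s hs by (intro av_PiE[OF k]) auto
    then show ?thesis using False ub i by (simp add: round_utility_def)
  qed
  then have "\<bar>Ssum k u i t h\<bar> \<le> (\<Sum>s\<in>{1..t}. 1)"
    unfolding Ssum_def by (intro order_trans[OF sum_abs] sum_mono) auto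
  then show ?thesis by simp
qed

lemma avg_eq:
  assumes k: "k \<ge> 1" and mp: "mixed_profile k A \<sigma>" and fin: "\<And>j. j < k \<Longrightarrow> finite (A j)"
  shows "avg_payoff k u \<sigma> i t = (\<Sum>h\<in>set_pmf (history_pmf k \<sigma> t). pmf (history_pmf k \<sigma> t) h * (Ssum k u i t h / real t))"
  unfolding avg_payoff_def Ssum_def
  by (subst integral_measure_pmf_real[OF hist_fin[OF k mp fin]]) (auto simp: mult.commute)

lemma P_bound:
  assumes k: "k \<ge> 1" and mp: "mixed_profile k A \<sigma>" and fin: "\<And>j. j < k \<Longrightarrow> finite (A j)" and i: "i < k"
    and ub: "\<And>i a. i < k \<Longrightarrow> a \<in> (\<Pi>\<^sub>E j\<in>{..<k}. A j) \<Longrightarrow> \<bar>u i a\<bar> \<le> 1"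
  shows "avg_payoff k u \<sigma> i t \<le> 1"
proof -
  let ?H = "set_pmf (history_pmf k \<sigma> t)" and ?p = "pmf (history_pmf k \<sigma> t)"
  have eq: "avg_payoff k u \<sigma> i t = (\<Sum>h\<in>?H. ?p h * (Ssum k u i t h / real t))"
    by (rule avg_eq[OF k mp fin])
  have "avg_payoff k u \<sigma> i t \<le> (\<Sum>h\<in>?H. ?p h * 1)"
    unfolding eq
  proof (intro sum_mono mult_left_mono)
    fix h assume h: "h \<in> ?H"
    have "\<bar>Ssum k u i t h\<bar> \<le> real t" by (rule S_bound[OF k mp i ub h])
    then show "Ssum k u i t h / real t \<le> 1"
      by (cases "t = 0") (auto simp: divide_le_eq_1 abs_le_iff)
  qed simp
  also have "\<dots> = 1" using sum_pmf_eq_1[OF hist_fin[OF k mp fin] order_refl] by simp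
  finally show ?thesis .
qed



theorem lemma6:
  fixes k :: nat and A :: "nat \<Rightarrow> 'a set"
    and u :: "nat \<Rightarrow> (nat \<Rightarrow> 'a) \<Rightarrow> real"
    and \<sigma> :: "nat \<Rightarrow> 'a list \<Rightarrow> 'a pmf"
    and \<alpha> :: real
  assumes "k \<ge> 1"
    and "\<And>j. j < k \<Longrightarrow> finite (A j)"
    and "\<And>i a. i < k \<Longrightarrow> a \<in> (\<Pi>\<^sub>E j\<in>{..<k}. A j) \<Longrightarrow> \<bar>u i a\<bar> \<le> 1"
    and "mixed_profile k A \<sigma>"
    and "\<alpha> > 0"
  shows "\<exists>p. cyclic_path k A p \<and>
           (\<forall>i<k. game_utility k u \<sigma> i - ereal \<alpha> \<le> ereal (avg_weight u p i))"
proof -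
  note k = assms(1) and fin = assms(2) and ub = assms(3) and mp = assms(4) and ap = assms(5)
  define P where "P i t = avg_payoff k u \<sigma> i t" for i t
  have Pb: "P i t \<le> 1" if "i < k" for i t using P_bound[OF k mp fin that ub] by (simp add: P_def)
  have ev: "eventually (\<lambda>t. \<forall>i\<in>{..<k}. game_utility k u \<sigma> i - ereal (\<alpha>/2) \<le> ereal (P i t)) sequentially"
  proof (rule eventually_ball_finite[OF finite_lessThan], rule ballI)
    fix i assume "i \<in> {..<k}" then have i: "i < k" by simp
    show "eventually (\<lambda>t. game_utility k u \<sigma> i - ereal (\<alpha>/2) \<le> ereal (P i t)) sequentially"
    proof (cases "game_utility k u \<sigma> i")
      case (real r)
      have "ereal (r - \<alpha>/2) < game_utility k u \<sigma> i" using real ap by simp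
      then have "eventually (\<lambda>t. ereal (r - \<alpha>/2) < ereal (P i t)) sequentially"
        unfolding game_utility_def P_def by (rule less_LiminfD)
      then show ?thesis by (rule eventually_mono) (simp add: real)
    next
      case PInf
      have "ereal 1 < game_utility k u \<sigma> i" using PInf by simp
      then have "eventually (\<lambda>t. ereal 1 < ereal (P i t)) sequentially"
        unfolding game_utility_def P_def by (rule less_LiminfD)
      then show ?thesis
      proof (rule eventually_mono)
        fix t assume "ereal 1 < ereal (P i t)"
        with Pb[OF i, of t] show "game_utility k u \<sigma> i - ereal (\<alpha>/2) \<le> ereal (P i t)" by simp
      qed
    next
      case MInf then show ?thesis by simp
    qed
  qed
  then obtain T where T: "\<And>t i. t \<ge> T \<Longrightarrow> i < k \<Longrightarrow> game_utility k u \<sigma> i - ereal (\<alpha>/2) \<le> ereal (P i t)"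
    unfolding eventually_sequentially by auto
  define t where "t = k * (T + nat \<lceil>12 / \<alpha>\<rceil> + 1)"
  have tT: "T \<le> t" using k unfolding t_def by (metis le_add1 le_trans mult_le_mono1 mult_1 add.assoc)
  have kt: "k \<le> t" using k unfolding t_def by simp
  have tmod: "t mod k = 0" unfolding t_def by simp
  have tbig: "12 * real k \<le> \<alpha> * real t"
  proof -
    have "12 / \<alpha> \<le> real (nat \<lceil>12 / \<alpha>\<rceil>)" by linarith
    also have "\<dots> \<le> real (T + nat \<lceil>12 / \<alpha>\<rceil> + 1)" by simp
    finally have "12 \<le> \<alpha> * real (T + nat \<lceil>12 / \<alpha>\<rceil> + 1)" using ap by (simp add: divide_le_eq mult.commute)
    then have "real k * 12 \<le> real k * (\<alpha> * real (T + nat \<lceil>12 / \<alpha>\<rceil> + 1))" by (intro mult_left_mono) auto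
    then show ?thesis unfolding t_def by (simp add: algebra_simps)
  qed
  have tpos: "t > 0" using kt k by simp
  define H where "H = set_pmf (history_pmf k \<sigma> t)"
  define p where "p = pmf (history_pmf k \<sigma> t)"
  have finH: "finite H" unfolding H_def by (rule hist_fin[OF k mp fin])
  have hs: "length h = t \<and> (\<forall>r<t. h ! r \<in> A (mover k (r + 1)))" if "h \<in> H" for h
    using hist_supp[OF k mp] that unfolding H_def by blast
  have "(\<Pi>\<^sub>E j\<in>{..<k}. A j) \<noteq> {}"
  proof -
    have "A j \<noteq> {}" if "j < k" for j
      using mp that set_pmf_not_empty[of "\<sigma> j []"] by (auto simp: mixed_profile_def)
    then show ?thesis by (simp add: PiE_eq_empty_iff)
  qed
  then obtain c where c: "c \<in> (\<Pi>\<^sub>E j\<in>{..<k}. A j)" by blast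
  define j0 where "j0 = 1 mod k"
  have j0: "j0 < k" using k by (simp add: j0_def)
  define v0 where "v0 = (c, j0)"
  define C where "C h = map (cv k c (action_vector k (take k h)) j0) [Suc 0..<Suc k] @
      map (vtx k h) [Suc k..<Suc t] @ map (cv k (action_vector k (take t h)) c j0) [Suc 0..<Suc k]" for h
  have Cprops: "wk k A v0 (C h) v0 \<and> length (C h) = t + k \<and>
     (\<forall>i<k. wt u (C h) i \<ge> Ssum k u i t h - 2 * real k \<and> \<bar>wt u (C h) i\<bar> \<le> real (t + k))"
    if h: "h \<in> H" for h
  proof -
    note hh = hs[OF h]
    have a1: "action_vector k (take k h) \<in> (\<Pi>\<^sub>E j\<in>{..<k}. A j)"
      using hh kt by (intro av_PiE[OF k]) auto
    have a2: "action_vector k (take t h) \<in> (\<Pi>\<^sub>E j\<in>{..<k}. A j)"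
      using hh kt by (intro av_PiE[OF k]) auto
    have w1: "wk k A v0 (map (cv k c (action_vector k (take k h)) j0) [Suc 0..<Suc k]) (action_vector k (take k h), j0)"
      unfolding v0_def by (rule conn[OF k c a1 j0])
    have w3: "wk k A (action_vector k (take t h), j0) (map (cv k (action_vector k (take t h)) c j0) [Suc 0..<Suc k]) v0"
      unfolding v0_def by (rule conn[OF k a2 c j0])
    have w2: "wk k A (vtx k h k) (map (vtx k h) [Suc k..<Suc t]) (vtx k h t)"
      using hh kt by (intro hist_walk[OF k]) auto
    have "(k + 1) mod k = 1 mod k" by (rule mod_add_self1)
    then have "vtx k h k = (action_vector k (take k h), j0)" by (simp add: vtx_def j0_def)
    moreover have "vtx k h t = (action_vector k (take t h), j0)"
    proof -
      have "(t + 1) mod k = (t mod k + 1) mod k" by (rule mod_add_left_eq[symmetric])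
      also have "\<dots> = 1 mod k" using tmod by (simp only: add_0)
      finally show ?thesis by (simp add: vtx_def j0_def)
    qed
    ultimately have w2': "wk k A (action_vector k (take k h), j0) (map (vtx k h) [Suc k..<Suc t]) (action_vector k (take t h), j0)"
      using w2 by simp
    have W: "wk k A v0 (C h) v0" unfolding C_def
      by (rule wk_append[OF w1 wk_append[OF w2' w3]])
    have L: "length (C h) = t + k" using kt k by (simp add: C_def)
    have "wt u (C h) i \<ge> Ssum k u i t h - 2 * real k \<and> \<bar>wt u (C h) i\<bar> \<le> real (t + k)" if i: "i < k" for i
    proof
      have b1: "\<bar>wt u (map (cv k c (action_vector k (take k h)) j0) [Suc 0..<Suc k]) i\<bar> \<le> real k"
        using wt_bound_wk[where u=u, OF w1 i ub] by (simp del: upt_Suc)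
      have b3: "\<bar>wt u (map (cv k (action_vector k (take t h)) c j0) [Suc 0..<Suc k]) i\<bar> \<le> real k"
        using wt_bound_wk[where u=u, OF w3 i ub] by (simp del: upt_Suc)
      have m: "wt u (map (vtx k h) [Suc k..<Suc t]) i = Ssum k u i t h"
        unfolding Ssum_def using hh kt by (intro hist_weight) auto
      show "wt u (C h) i \<ge> Ssum k u i t h - 2 * real k"
        using b1 b3 m unfolding C_def wt_append by linarith
      show "\<bar>wt u (C h) i\<bar> \<le> real (t + k)" using wt_bound_wk[where u=u, OF W i ub] L by simp
    qed
    then show ?thesis using W L by blast
  qed
  define x where "x h i = wt u (C h) i / real (t + k)" for h i
  have "\<exists>n::'a list\<Rightarrow>nat. sum n H > 0 \<and>
     (\<forall>i\<in>{..<k}. (\<Sum>h\<in>H. real (n h) * x h i) \<ge> ((\<Sum>h\<in>H. p h * x h i) - \<alpha>/4) * real (sum n H))"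
  proof (rule approx_weights[OF finH])
    show "\<And>h. h \<in> H \<Longrightarrow> 0 \<le> p h" by (simp add: p_def)
    show "sum p H = 1" unfolding p_def H_def by (rule sum_pmf_eq_1[OF hist_fin[OF k mp fin] order_refl])
    show "\<And>h i. h \<in> H \<Longrightarrow> i \<in> {..<k} \<Longrightarrow> \<bar>x h i\<bar> \<le> 1"
      using Cprops kt tpos by (auto simp: x_def divide_le_eq_1 abs_divide)
    show "0 < \<alpha> / 4" using ap by simp
  qed
  then obtain n :: "'a list \<Rightarrow> nat" where npos: "sum n H > 0"
    and napp: "\<And>i. i < k \<Longrightarrow> (\<Sum>h\<in>H. real (n h) * x h i) \<ge> ((\<Sum>h\<in>H. p h * x h i) - \<alpha>/4) * real (sum n H)"
    by auto
  obtain hl where hl: "distinct hl" "set hl = H" using finite_distinct_list[OF finH] by blast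
  define big where "big = concat (map (\<lambda>h. concat (replicate (n h) (C h))) hl)"
  have Wbig: "wk k A v0 big v0" unfolding big_def
  proof (rule wk_concat)
    fix xs assume "xs \<in> set (map (\<lambda>h. concat (replicate (n h) (C h))) hl)"
    then obtain h where h: "h \<in> H" and xs: "xs = concat (replicate (n h) (C h))" using hl by auto
    show "wk k A v0 xs v0" unfolding xs
      by (rule wk_concat) (use Cprops[OF h] in auto)
  qed
  have wtbig: "wt u big i = (\<Sum>h\<in>H. real (n h) * wt u (C h) i)" for i
  proof -
    have "wt u big i = (\<Sum>h\<leftarrow>hl. real (n h) * wt u (C h) i)"
      unfolding big_def wt_concat by (simp add: o_def wt_rep)
    also have "\<dots> = (\<Sum>h\<in>H. real (n h) * wt u (C h) i)"
      using hl by (simp add: sum_list_distinct_conv_sum_set)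
    finally show ?thesis .
  qed
  have lenbig: "length big = sum n H * (t + k)"
  proof -
    have "length big = (\<Sum>h\<leftarrow>hl. n h * length (C h))"
      unfolding big_def by (simp add: length_concat o_def sum_list_replicate)
    also have "\<dots> = (\<Sum>h\<in>H. n h * (t + k))"
      using hl Cprops by (simp add: sum_list_distinct_conv_sum_set)
    also have "\<dots> = sum n H * (t + k)" by (simp add: sum_distrib_right)
    finally show ?thesis .
  qed
  have bigne: "big \<noteq> []" using lenbig npos kt k by auto
  show ?thesis
  proof (intro exI conjI allI impI)
    show "cyclic_path k A (v0 # big)" by (rule closed_cyclic(1)[OF Wbig bigne])
    fix i assume i: "i < k"
    let ?N = "real (sum n H)" and ?L = "real (t + k)"
    have Lpos: "?L > 0" using kt k by simp
    have Npos: "?N > 0" using npos by (simp only: of_nat_0_less_iff)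
    have avg: "avg_weight u (v0 # big) i = (\<Sum>h\<in>H. real (n h) * x h i) / ?N"
    proof -
      have "avg_weight u (v0 # big) i = wt u big i / real (length big)" by (rule closed_cyclic(2)[OF Wbig bigne])
      also have "wt u big i = ?L * (\<Sum>h\<in>H. real (n h) * x h i)"
        unfolding wtbig x_def sum_distrib_left using Lpos by (intro sum.cong) auto
      also have "real (length big) = ?N * ?L" unfolding lenbig by simp
      finally show ?thesis using Lpos by simp
    qed
    have step1: "avg_weight u (v0 # big) i \<ge> (\<Sum>h\<in>H. p h * x h i) - \<alpha>/4"
      unfolding avg using napp[OF i] Npos by (simp add: le_divide_eq)
    have tP: "(\<Sum>h\<in>H. p h * Ssum k u i t h) = real t * P i t"
    proof -
      have "P i t = (\<Sum>h\<in>H. p h * (Ssum k u i t h / real t))"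
        unfolding P_def H_def p_def by (rule avg_eq[OF k mp fin])
      also have "\<dots> = (\<Sum>h\<in>H. p h * Ssum k u i t h) / real t"
        by (simp add: sum_divide_distrib)
      finally show ?thesis using tpos by simp
    qed
    have step2: "(\<Sum>h\<in>H. p h * x h i) \<ge> (real t * P i t - 2 * real k) / ?L"
    proof -
      have "(\<Sum>h\<in>H. p h * x h i) \<ge> (\<Sum>h\<in>H. p h * ((Ssum k u i t h - 2 * real k) / ?L))"
        unfolding x_def using Cprops i Lpos
        by (intro sum_mono mult_left_mono divide_right_mono) (auto simp: p_def)
      also have "(\<Sum>h\<in>H. p h * ((Ssum k u i t h - 2 * real k) / ?L)) =
          ((\<Sum>h\<in>H. p h * Ssum k u i t h) - 2 * real k * sum p H) / ?L"
        by (simp add: sum_divide_distrib[symmetric] right_diff_distrib sum_subtractf sum_distrib_left sum_distrib_right mult.commute mult.left_commute)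
      also have "sum p H = 1" unfolding p_def H_def by (rule sum_pmf_eq_1[OF hist_fin[OF k mp fin] order_refl])
      finally show ?thesis using tP by simp
    qed
    have step3: "(real t * P i t - 2 * real k) / ?L \<ge> P i t - \<alpha>/4"
    proof -
      have "real k * P i t \<le> real k" using Pb[OF i] by (simp add: mult_left_le)
      then have "(real t * P i t - 2 * real k) \<ge> ?L * P i t - 3 * real k" by (simp add: algebra_simps)
      moreover have "3 * real k \<le> \<alpha>/4 * ?L"
      proof -
        have "\<alpha> * real k \<ge> 0" using ap by simp
        then show ?thesis using tbig by (simp add: algebra_simps)
      qed
      ultimately have "(real t * P i t - 2 * real k) \<ge> ?L * (P i t - \<alpha>/4)" by (simp add: algebra_simps)
      then show ?thesis using Lpos by (simp add: le_divide_eq mult.commute)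
    qed
    have fin_ineq: "avg_weight u (v0 # big) i \<ge> P i t - \<alpha>/2" using step1 step2 step3 by linarith
    have TT: "game_utility k u \<sigma> i - ereal (\<alpha>/2) \<le> ereal (P i t)" by (rule T[OF tT i])
    show "game_utility k u \<sigma> i - ereal \<alpha> \<le> ereal (avg_weight u (v0 # big) i)"
    proof (cases "game_utility k u \<sigma> i")
      case (real r)
      then show ?thesis using TT fin_ineq by simp
    next
      case PInf then show ?thesis using TT by simp
    next
      case MInf then show ?thesis by simp
    qed
  qed
qed


end
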